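(* For all real $\alpha,\beta$ with $\beta\neq0$, every integer $n\ge0$ and every real $x>0$, \[ P_n^{(\alpha,\beta)}(x^{\beta})=(-1)^n x^{n-\alpha}e^{-x^{\beta}}\Big(\frac{d}{dx}\Big)^n\big(x^{\alpha}e^{x^{\beta}}\big), \qquad P_n^{(\alpha,\beta)}(x^{-\beta})=x^{\alpha+1}e^{-x^{-\beta}}\Big(\frac{d}{dx}\Big)^n\big(x^{n-1-\alpha}e^{x^{-\beta}}\big). \]
   Context: For real $\alpha,\beta$ with $\beta\neq0$, the polynomials $P_n^{(\alpha,\beta)}(x)$, $n\ge0$, are defined by $\sum_{n\ge0}P_n^{(\alpha,\beta)}(x)\frac{t^n}{n!}=(1-t)^{\alpha}\exp\big(x((1-t)^{\beta}-1)\big)$ (formal power series in $t$). Real powers $x^{\gamma}$ of $x>0$ are the usual positive real powers. *)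

theory Defs
  imports "HOL-Analysis.Analysis" "HOL-Computational_Algebra.Formal_Power_Series"
begin

definition one_minus_t_powr :: "real \<Rightarrow> real fps" where
  "one_minus_t_powr a = fps_binomial a oo (- fps_X)"

text \<open>Generating function (1-t)^alpha * exp(x((1-t)^beta - 1)); exp(x g) for g with zero
  constant term is the composition of the series exp(x t) with g.\<close>
definition P_gen :: "real \<Rightarrow> real \<Rightarrow> real \<Rightarrow> real fps" where
  "P_gen \<alpha> \<beta> x = one_minus_t_powr \<alpha> * (fps_exp x oo (one_minus_t_powr \<beta> - 1))"

definition P :: "nat \<Rightarrow> real \<Rightarrow> real \<Rightarrow> real \<Rightarrow> real" where
  "P n \<alpha> \<beta> x = fact n * fps_nth (P_gen \<alpha> \<beta> x) n"

end

theory Submission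
  imports Defs
begin


lemma C_nth: "fps_nth (one_minus_t_powr a) n = (-1)^n * (a gchoose n)"
  by (simp add: one_minus_t_powr_def fps_compose_uminus')

lemma C_mult: "one_minus_t_powr a * one_minus_t_powr b = one_minus_t_powr (a + b)"
  unfolding one_minus_t_powr_def
  by (simp add: fps_binomial_add_mult fps_compose_mult_distrib)

lemma C_0: "one_minus_t_powr 0 = 1"
  by (simp add: one_minus_t_powr_def fps_eq_iff fps_compose_uminus')

lemma C_pow: "one_minus_t_powr b ^ j = one_minus_t_powr (real j * b)"
proof (induction j)
  case 0 then show ?case by (simp add: C_0)
next
  case (Suc j) then show ?case by (simp add: C_mult algebra_simps)
qed

lemma B_pow: "(one_minus_t_powr b - 1) ^ k = (\<Sum>j\<le>k. fps_const (real (k choose j) * (-1)^(k-j)) * one_minus_t_powr (real j * b))"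
proof -
  have "(one_minus_t_powr b - 1) ^ k = (one_minus_t_powr b + (-1)) ^ k" by simp
  also have "\<dots> = (\<Sum>j\<le>k. of_nat (k choose j) * one_minus_t_powr b ^ j * (-1) ^ (k - j))"
    by (rule binomial_ring)
  also have "\<dots> = (\<Sum>j\<le>k. fps_const (real (k choose j) * (-1)^(k-j)) * one_minus_t_powr (real j * b))"
    by (intro sum.cong refl) (simp add: C_pow fps_of_nat fps_const_mult[symmetric] fps_const_power[symmetric] fps_const_neg[symmetric] algebra_simps del: fps_const_mult fps_const_power fps_const_neg)
  finally show ?thesis .
qed

lemma AB_nth: "fps_nth (one_minus_t_powr a * (one_minus_t_powr b - 1) ^ k) n =
   (\<Sum>j\<le>k. real (k choose j) * (-1)^(k-j) * ((-1)^n * ((a + b * real j) gchoose n)))"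
proof -
  have "one_minus_t_powr a * (one_minus_t_powr b - 1) ^ k = (\<Sum>j\<le>k. fps_const (real (k choose j) * (-1)^(k-j)) * one_minus_t_powr (a + b * real j))"
    unfolding B_pow sum_distrib_left
  proof (intro sum.cong refl)
    fix j assume "j \<in> {..k}"
    have "one_minus_t_powr a * (fps_const (real (k choose j) * (-1)^(k-j)) * one_minus_t_powr (real j * b))
      = fps_const (real (k choose j) * (-1)^(k-j)) * (one_minus_t_powr a * one_minus_t_powr (real j * b))"
      by (simp only: mult.left_commute)
    then show "one_minus_t_powr a * (fps_const (real (k choose j) * (-1)^(k-j)) * one_minus_t_powr (real j * b))
      = fps_const (real (k choose j) * (-1)^(k-j)) * one_minus_t_powr (a + b * real j)"
      by (simp add: C_mult mult.commute)
  qed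
  then show ?thesis by (simp add: fps_sum_nth C_nth)
qed


lemma B0: "fps_nth (one_minus_t_powr b - 1) 0 = 0"
  by (simp add: C_nth)

lemma G_nth: "fps_nth (P_gen a b z) n = (\<Sum>k\<le>n. z^k / fact k * fps_nth (one_minus_t_powr a * (one_minus_t_powr b - 1)^k) n)"
proof -
  define A where "A = one_minus_t_powr a"
  define B where "B = one_minus_t_powr b - 1"
  have B0': "fps_nth B 0 = 0" unfolding B_def by (rule B0)
  have Z: "fps_nth (B^k) m = 0" if "m < k" for k m
    using startsby_zero_power_prefix[OF B0'] that by blast
  have "fps_nth (P_gen a b z) n = (\<Sum>i=0..n. fps_nth A i * fps_nth (fps_exp z oo B) (n - i))"
    unfolding P_gen_def A_def B_def by (rule fps_mult_nth)
  also have "\<dots> = (\<Sum>i=0..n. fps_nth A i * (\<Sum>k=0..n-i. z^k / fact k * fps_nth (B^k) (n - i)))"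
    by (simp add: fps_compose_nth)
  also have "\<dots> = (\<Sum>i=0..n. fps_nth A i * (\<Sum>k=0..n. z^k / fact k * fps_nth (B^k) (n - i)))"
  proof (rule sum.cong[OF refl])
    fix i assume "i \<in> {0..n}"
    have "(\<Sum>k=0..n-i. z^k / fact k * fps_nth (B^k) (n - i)) = (\<Sum>k=0..n. z^k / fact k * fps_nth (B^k) (n - i))"
      by (rule sum.mono_neutral_left) (auto simp: Z)
    then show "fps_nth A i * (\<Sum>k=0..n-i. z^k / fact k * fps_nth (B^k) (n - i)) = fps_nth A i * (\<Sum>k=0..n. z^k / fact k * fps_nth (B^k) (n - i))"
      by simp
  qed
  also have "\<dots> = (\<Sum>k=0..n. z^k / fact k * (\<Sum>i=0..n. fps_nth A i * fps_nth (B^k) (n - i)))"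
    unfolding sum_distrib_left
    by (subst sum.swap) (simp add: mult.left_commute)
  also have "\<dots> = (\<Sum>k\<le>n. z^k / fact k * fps_nth (A * B^k) n)"
    by (simp add: fps_mult_nth atLeast0AtMost)
  finally show ?thesis unfolding A_def B_def .
qed

definition Q :: "nat \<Rightarrow> real \<Rightarrow> real \<Rightarrow> real \<Rightarrow> real" where
  "Q n a b z = (\<Sum>k\<le>n. (-1)^n * fact n / fact k * z^k *
       (\<Sum>j\<le>k. real (k choose j) * (-1)^(k-j) * ((a + b * real j) gchoose n)))"

lemma P_Q: "P n a b z = Q n a b z"
proof -
  define S where "S k = (\<Sum>j\<le>k. real (k choose j) * (-1)^(k-j) * ((a + b * real j) gchoose n))" for k
  have 1: "(\<Sum>j\<le>k. real (k choose j) * (-1)^(k-j) * ((-1)^n * ((a + b * real j) gchoose n))) = (-1)^n * S k" for k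
    unfolding S_def sum_distrib_left by (intro sum.cong refl) (simp add: mult_ac)
  have "P n a b z = fact n * (\<Sum>k\<le>n. z^k / fact k * ((-1)^n * S k))"
    unfolding P_def G_nth AB_nth 1 ..
  also have "\<dots> = (\<Sum>k\<le>n. (-1)^n * fact n / fact k * z^k * S k)"
    unfolding sum_distrib_left by (intro sum.cong refl) (simp add: field_simps)
  finally show ?thesis unfolding Q_def S_def .
qed



definition hh :: "nat \<Rightarrow> real \<Rightarrow> real" where "hh n x = fact n * (x gchoose n)"

definition tt :: "real \<Rightarrow> real \<Rightarrow> nat \<Rightarrow> nat \<Rightarrow> real" where
  "tt a b n k = (\<Sum>j\<le>k. real (k choose j) * (-1)^(k-j) * hh n (a + b * real j))"

definition cc :: "real \<Rightarrow> real \<Rightarrow> nat \<Rightarrow> nat \<Rightarrow> real" where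
  "cc a b n k = (-1)^n * tt a b n k / fact k"

lemma hh_Suc: "hh (Suc n) x = (x - real n) * hh n x"
  unfolding hh_def gbinomial_mult_fact by (simp add: mult.commute)

lemma Q_cc: "Q n a b z = (\<Sum>k\<le>n. cc a b n k * z^k)"
  unfolding Q_def cc_def tt_def hh_def
  by (intro sum.cong refl) (simp add: sum_distrib_left field_simps)

lemma tt_vanish:
  assumes "n < k" shows "tt a b n k = 0"
proof -
  define A where "A = one_minus_t_powr a"
  define B where "B = one_minus_t_powr b - 1"
  have B0': "fps_nth B 0 = 0" unfolding B_def by (rule B0)
  have Z: "fps_nth (B^k) m = 0" if "m < k" for m
    using startsby_zero_power_prefix[OF B0'] that by blast
  have "fps_nth (A * B^k) n = 0"
    unfolding fps_mult_nth using assms by (intro sum.neutral) (auto simp: Z)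
  then have "(\<Sum>j\<le>k. real (k choose j) * (-1)^(k-j) * ((-1)^n * ((a + b * real j) gchoose n))) = 0"
    unfolding A_def B_def AB_nth .
  then have "(-1)^n * fact n * (\<Sum>j\<le>k. real (k choose j) * (-1)^(k-j) * ((-1)^n * ((a + b * real j) gchoose n))) = 0"
    by simp
  then show ?thesis
    unfolding tt_def hh_def sum_distrib_left
    by (simp add: mult_ac)
qed

lemma tt_Suc0: "tt a b (Suc n) 0 = (a - real n) * tt a b n 0"
  unfolding tt_def by (simp add: hh_Suc)

lemma tt_Suc:
  "tt a b (Suc n) (Suc k) = (a - real n + b * real (Suc k)) * tt a b n (Suc k) + b * real (Suc k) * tt a b n k"
proof -
  define g where "g j = hh n (a + b * real j)" for j
  define m where "m = Suc k"
  have T1: "tt a b (Suc n) m = (a - real n + b * real m) * tt a b n m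
      - b * (\<Sum>j\<le>m. real (m choose j) * (-1)^(m-j) * real (m - j) * g j)"
  proof -
    have "tt a b (Suc n) m = (\<Sum>j\<le>m. real (m choose j) * (-1)^(m-j) * ((a - real n + b * real m) * g j - b * real (m - j) * g j))"
      unfolding tt_def hh_Suc g_def
      by (intro sum.cong refl) (auto simp: of_nat_diff algebra_simps)
    then show ?thesis
      unfolding tt_def g_def[symmetric] sum_distrib_left sum_subtractf[symmetric]
      by (simp add: algebra_simps)
  qed
  have T2: "(\<Sum>j\<le>m. real (m choose j) * (-1)^(m-j) * real (m - j) * g j) = - real m * tt a b n k"
  proof -
    have "(\<Sum>j\<le>m. real (m choose j) * (-1)^(m-j) * real (m - j) * g j)
        = (\<Sum>j\<le>k. real (m choose j) * (-1)^(m-j) * real (m - j) * g j)"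
      unfolding m_def by (simp add: sum.atMost_Suc)
    also have "\<dots> = (\<Sum>j\<le>k. - real m * (real (k choose j) * (-1)^(k-j) * g j))"
    proof (intro sum.cong refl)
      fix j assume j: "j \<in> {..k}"
      have "(m - j) * (m choose j) = m * (k choose j)"
        using binomial_absorb_comp[of m j] unfolding m_def by simp
      then have e: "real (m - j) * real (m choose j) = real m * real (k choose j)"
        by (metis of_nat_mult)
      have s: "(-1::real)^(m-j) = - ((-1)^(k-j))"
        using j unfolding m_def by (simp add: Suc_diff_le)
      show "real (m choose j) * (-1)^(m-j) * real (m - j) * g j = - real m * (real (k choose j) * (-1)^(k-j) * g j)"
        using e s by (simp add: algebra_simps)
    qed
    also have "\<dots> = - real m * tt a b n k"
      unfolding tt_def g_def sum_distrib_left by simp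
    finally show ?thesis .
  qed
  from T1 have "tt a b (Suc n) m = (a - real n + b * real m) * tt a b n m - b * (- real m * tt a b n k)"
    unfolding T2 .
  then show ?thesis unfolding m_def by (simp add: algebra_simps)
qed

lemma cc_Suc0: "cc a b (Suc n) 0 = (real n - a) * cc a b n 0"
  unfolding cc_def tt_Suc0 by (simp add: algebra_simps)

lemma cc_Suc: "cc a b (Suc n) (Suc k) = (real n - a - b * real (Suc k)) * cc a b n (Suc k) - b * cc a b n k"
proof -
  have f: "fact (Suc k) = (1 + real k) * (fact k :: real)" by simp
  have nz: "(fact k :: real) \<noteq> 0" "1 + real k \<noteq> 0" by auto
  define F where "F = (fact (Suc k) :: real)"
  have F0: "F \<noteq> 0" unfolding F_def by simp
  have e1: "cc a b (Suc n) (Suc k) * F = - ((-1)^n * tt a b (Suc n) (Suc k))"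
    unfolding cc_def F_def by simp
  have e2: "cc a b n (Suc k) * F = (-1)^n * tt a b n (Suc k)"
    unfolding cc_def F_def by simp
  have e3: "cc a b n k * F = (-1)^n * tt a b n k * (1 + real k)"
    unfolding cc_def F_def f using nz by simp
  have "((real n - a - b * real (Suc k)) * cc a b n (Suc k) - b * cc a b n k) * F
     = (real n - a - b * real (Suc k)) * (cc a b n (Suc k) * F) - b * (cc a b n k * F)"
    by (simp add: algebra_simps)
  also have "\<dots> = (real n - a - b * real (Suc k)) * ((-1)^n * tt a b n (Suc k)) - b * ((-1)^n * tt a b n k * (1 + real k))"
    by (simp only: e2 e3)
  also have "\<dots> = cc a b (Suc n) (Suc k) * F"
    unfolding e1 tt_Suc by (simp add: algebra_simps)
  finally show ?thesis using F0 by simp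
qed

lemma cc_vanish: "n < k \<Longrightarrow> cc a b n k = 0"
  unfolding cc_def by (simp add: tt_vanish)

lemma Q_rec: "Q (Suc n) a b z = (real n - a - b * z) * Q n a b z - b * (\<Sum>k\<le>n. cc a b n k * real k * z^k)"
proof -
  have "Q (Suc n) a b z = cc a b (Suc n) 0 + (\<Sum>k\<le>n. cc a b (Suc n) (Suc k) * z^Suc k)"
    unfolding Q_cc by (subst sum.atMost_Suc_shift) simp
  also have "\<dots> = (real n - a) * cc a b n 0 + (\<Sum>k\<le>n. (real n - a - b * real (Suc k)) * cc a b n (Suc k) * z^Suc k
      - b * (cc a b n k * z^Suc k))"
    unfolding cc_Suc cc_Suc0 by (intro arg_cong2[where f=plus] refl sum.cong) (simp_all add: algebra_simps)
  also have "\<dots> = (real n - a) * cc a b n 0 + (\<Sum>k\<le>n. (real n - a - b * real (Suc k)) * cc a b n (Suc k) * z^Suc k)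
      - b * (\<Sum>k\<le>n. cc a b n k * z^Suc k)"
    unfolding sum_subtractf sum_distrib_left by simp
  also have "(real n - a) * cc a b n 0 + (\<Sum>k\<le>n. (real n - a - b * real (Suc k)) * cc a b n (Suc k) * z^Suc k)
      = (\<Sum>k\<le>Suc n. (real n - a - b * real k) * cc a b n k * z^k)"
    by (subst sum.atMost_Suc_shift) simp
  also have "\<dots> = (\<Sum>k\<le>n. (real n - a - b * real k) * cc a b n k * z^k)"
    by (simp add: cc_vanish)
  also have "\<dots> - b * (\<Sum>k\<le>n. cc a b n k * z^Suc k) = (real n - a - b * z) * Q n a b z - b * (\<Sum>k\<le>n. cc a b n k * real k * z^k)"
    unfolding Q_cc sum_distrib_left sum_subtractf[symmetric] by (intro sum.cong refl) (simp add: algebra_simps)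
  finally show ?thesis .
qed



lemma dQ: "((\<lambda>z. Q n a b z) has_real_derivative (\<Sum>k\<le>n. cc a b n k * (real k * z^(k-1)))) (at z)"
proof -
  have e: "(\<lambda>z. Q n a b z) = (\<lambda>z. \<Sum>k\<le>n. cc a b n k * z^k)" by (simp add: Q_cc fun_eq_iff)
  show ?thesis unfolding e by (auto intro!: derivative_eq_intros simp: mult_ac)
qed

lemma zdQ: "z * (\<Sum>k\<le>n. cc a b n k * (real k * z^(k-1))) = (\<Sum>k\<le>n. cc a b n k * real k * z^k)"
  unfolding sum_distrib_left
proof (intro sum.cong refl)
  fix k assume "k \<in> {..n}"
  show "z * (cc a b n k * (real k * z ^ (k - 1))) = cc a b n k * real k * z ^ k"
    by (cases k) (simp_all add: algebra_simps)
qed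

lemma step_deriv:
  assumes y: "y > 0"
  shows "((\<lambda>y. y powr (a - real n) * exp (y powr b) * Q n a b (y powr b)) has_real_derivative
           - (y powr (a - real (Suc n)) * exp (y powr b) * Q (Suc n) a b (y powr b))) (at y)"
proof -
  define z where "z = y powr b"
  define p where "p = y powr (a - real (Suc n))"
  define D where "D = (\<Sum>k\<le>n. cc a b n k * (real k * z^(k-1)))"
  have h1: "y powr (a - real n) = p * y"
  proof -
    have "y powr (a - real n) = y powr ((a - real (Suc n)) + 1)" by simp
    also have "\<dots> = p * y" unfolding p_def powr_add using y by simp
    finally show ?thesis .
  qed
  have h2: "y powr (a - real n - 1) = p" unfolding p_def using y by (simp add: algebra_simps)
  have h3: "y powr (b - 1) = z / y" unfolding z_def using y by (simp add: powr_diff)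
  have yz: "y * (z / y) = z" using y by simp
  have "((\<lambda>y. y powr (a - real n) * exp (y powr b) * Q n a b (y powr b)) has_real_derivative
      (a - real n) * y powr (a - real n - 1) * exp (y powr b) * Q n a b (y powr b)
      + y powr (a - real n) * (exp (y powr b) * (b * y powr (b - 1))) * Q n a b (y powr b)
      + y powr (a - real n) * exp (y powr b) * (D * (b * y powr (b - 1)))) (at y)"
    unfolding D_def z_def using y
    by (auto intro!: derivative_eq_intros DERIV_chain2[OF dQ] simp: algebra_simps)
  also have "(a - real n) * y powr (a - real n - 1) * exp (y powr b) * Q n a b (y powr b)
      + y powr (a - real n) * (exp (y powr b) * (b * y powr (b - 1))) * Q n a b (y powr b)
      + y powr (a - real n) * exp (y powr b) * (D * (b * y powr (b - 1)))
      = p * exp z * ((a - real n) * Q n a b z + b * z * Q n a b z + b * (z * D))"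
    unfolding h1 h2 h3 z_def[symmetric] using y
    by (simp add: algebra_simps yz)
  also have "\<dots> = - (y powr (a - real (Suc n)) * exp (y powr b) * Q (Suc n) a b (y powr b))"
    unfolding D_def zdQ Q_rec p_def[symmetric] z_def[symmetric] by (simp add: algebra_simps)
  finally show ?thesis .
qed

lemma main:
  assumes "y > 0"
  shows "(deriv ^^ n) (\<lambda>y. y powr a * exp (y powr b)) y = (-1)^n * (y powr (a - real n) * exp (y powr b) * Q n a b (y powr b))"
  using assms
proof (induction n arbitrary: y)
  case 0
  then show ?case by (simp add: Q_cc cc_def tt_def hh_def)
next
  case (Suc n)
  have "((\<lambda>y. (-1)^n * (y powr (a - real n) * exp (y powr b) * Q n a b (y powr b))) has_real_derivative
       (-1)^n * - (y powr (a - real (Suc n)) * exp (y powr b) * Q (Suc n) a b (y powr b))) (at y)"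
    by (intro DERIV_cmult step_deriv Suc.prems)
  then have "((deriv ^^ n) (\<lambda>y. y powr a * exp (y powr b)) has_real_derivative
       (-1)^n * - (y powr (a - real (Suc n)) * exp (y powr b) * Q (Suc n) a b (y powr b))) (at y)"
    by (rule has_field_derivative_transform_within_open[where S="{0<..}"]) (use Suc in auto)
  then show ?case by (simp add: DERIV_imp_deriv)
qed



lemma gneg: "(real n - 1 - a + - b * real j) gchoose n = (-1)^n * ((a + b * real j) gchoose n)"
proof -
  have "(a + b * real j) gchoose n = (-1)^n * ((real n - (a + b * real j) - 1) gchoose n)"
    by (rule gbinomial_negated_upper)
  also have "real n - (a + b * real j) - 1 = real n - 1 - a + - b * real j" by simp
  finally have "(-1)^n * ((a + b * real j) gchoose n) = (-1)^n * ((-1)^n * ((real n - 1 - a + - b * real j) gchoose n))"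
    by simp
  also have "\<dots> = (real n - 1 - a + - b * real j) gchoose n"
    by (simp add: mult.assoc[symmetric] power_mult_distrib[symmetric])
  finally show ?thesis by simp
qed

lemma Q_neg: "Q n (real n - 1 - a) (- b) w = (-1)^n * Q n a b w"
  unfolding Q_def gneg sum_distrib_left
  by (intro sum.cong refl) (simp add: sum_distrib_left mult_ac)

theorem theorem1:
  fixes \<alpha> \<beta> x :: real and n :: nat
  assumes "\<beta> \<noteq> 0" and "x > 0"
  shows "P n \<alpha> \<beta> (x powr \<beta>) =
           (-1) ^ n * x powr (real n - \<alpha>) * exp (- (x powr \<beta>)) *
           (deriv ^^ n) (\<lambda>y. y powr \<alpha> * exp (y powr \<beta>)) x \<and>
         P n \<alpha> \<beta> (x powr (- \<beta>)) =
           x powr (\<alpha> + 1) * exp (- (x powr (- \<beta>))) *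
           (deriv ^^ n) (\<lambda>y. y powr (real n - 1 - \<alpha>) * exp (y powr (- \<beta>))) x"
proof
  have pp: "x powr (real n - \<alpha>) * x powr (\<alpha> - real n) = 1"
    using assms by (simp add: powr_add[symmetric])
  have ee: "exp (- u) * exp u = 1" for u :: real by (simp add: exp_minus)
  have s: "(-1::real)^n * (-1)^n = 1" by (simp add: power_mult_distrib[symmetric])
  show "P n \<alpha> \<beta> (x powr \<beta>) =
           (-1) ^ n * x powr (real n - \<alpha>) * exp (- (x powr \<beta>)) *
           (deriv ^^ n) (\<lambda>y. y powr \<alpha> * exp (y powr \<beta>)) x"
  proof -
    have "(-1) ^ n * x powr (real n - \<alpha>) * exp (- (x powr \<beta>)) *
           ((-1)^n * (x powr (\<alpha> - real n) * exp (x powr \<beta>) * Q n \<alpha> \<beta> (x powr \<beta>)))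
       = ((-1)^n * (-1)^n) * (x powr (real n - \<alpha>) * x powr (\<alpha> - real n)) * (exp (- (x powr \<beta>)) * exp (x powr \<beta>)) * Q n \<alpha> \<beta> (x powr \<beta>)"
      by (simp only: mult_ac)
    also have "\<dots> = Q n \<alpha> \<beta> (x powr \<beta>)" by (simp only: pp ee s mult_1_left)
    finally show ?thesis unfolding main[OF assms(2)] P_Q by simp
  qed
  have pp2: "x powr (\<alpha> + 1) * x powr (real n - 1 - \<alpha> - real n) = 1"
    using assms by (simp add: powr_add[symmetric])
  show "P n \<alpha> \<beta> (x powr (- \<beta>)) =
           x powr (\<alpha> + 1) * exp (- (x powr (- \<beta>))) *
           (deriv ^^ n) (\<lambda>y. y powr (real n - 1 - \<alpha>) * exp (y powr (- \<beta>))) x"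
  proof -
    let ?w = "x powr (- \<beta>)"
    have "x powr (\<alpha> + 1) * exp (- ?w) *
           ((-1)^n * (x powr (real n - 1 - \<alpha> - real n) * exp ?w * ((-1)^n * Q n \<alpha> \<beta> ?w)))
       = ((-1)^n * (-1)^n) * (x powr (\<alpha> + 1) * x powr (real n - 1 - \<alpha> - real n)) * (exp (- ?w) * exp ?w) * Q n \<alpha> \<beta> ?w"
      by (simp only: mult_ac)
    also have "\<dots> = Q n \<alpha> \<beta> ?w" by (simp only: pp2 ee s mult_1_left)
    finally show ?thesis unfolding main[OF assms(2)] P_Q Q_neg by simp
  qed
qed


end
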